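(* Fix $y_0\in Y$. (a) A pair $(\bar\psi,\bar\eta)\in C(Y)\times C(Y)$ is an optimal solution of the dual problem if and only if both of the following hold: - $\bar\psi(f(y,u))-\bar\psi(y)\ge0$ for all $(y,u)\in G$; - $\min_{(y,u)\in G}\{k(y,u)-\bar\psi(y)+\bar\eta(f(y,u))-\bar\eta(y)\}=V(y_0)-\bar\psi(y_0)$. (b) If $\bar\eta\in C(Y)$ satisfies $\min_{(y,u)\in G}\{k(y,u)-V(y)+\bar\eta(f(y,u))-\bar\eta(y)\}=0$, then the pair $(V,\bar\eta)$ is an optimal solution of the dual problem.
   Context: Let $Y\subset\mathbb{R}^m$ be nonempty compact, $U_0$ a compact metric space, $U(\cdot):Y\rightsquigarrow U_0$ upper semicontinuous and compact-valued, and $f:\mathbb{R}^m\times U_0\to\mathbb{R}^m$, $k:\mathbb{R}^m\times U_0\to\mathbb{R}$ continuous. Put $A(y):=\{u\in U(y): f(y,u)\in Y\}$ and $G:=\{(y,u):y\in Y,\ u\in A(y)\}$. Standing assumption: $A(y)\ne\emptyset$ for all $y\in Y$. For $y_0\in Y$, let $\mathcal U_T(y_0)$ be the set of controls $u(0),\dots,u(T-1)$ with $u(t)\in A(y(t))$, where $y(0)=y_0$ and $y(t+1)=f(y(t),u(t))$. Define $V_T(y_0):=\frac1T\min_{u\in\mathcal U_T(y_0)}\sum_{t=0}^{T-1}k(y(t),u(t))$. Standing assumption of this result: for every $y\in Y$ the limit $V(y):=\lim_{T\to\infty}V_T(y)$ exists, and $V$ is continuous on $Y$. Dual problem: $d^*(y_0):=\sup\mu$,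 where the supremum is over triples $(\mu,\psi,\eta)\in\mathbb{R}\times C(Y)\times C(Y)$ with, for all $(y,u)\in G$: $$k(y,u)+\psi(y_0)-\psi(y)+\eta(f(y,u))-\eta(y)-\mu\ge0,\qquad\psi(f(y,u))-\psi(y)\ge0.$$ A pair $(\bar\psi,\bar\eta)\in C(Y)\times C(Y)$ is called an optimal solution of the dual problem if for all $(y,u)\in G$: $$k(y,u)+\bar\psi(y_0)-\bar\psi(y)+\bar\eta(f(y,u))-\bar\eta(y)\ge d^*(y_0),\qquad\bar\psi(f(y,u))-\bar\psi(y)\ge0.$$ *)

theory Defs
  imports "HOL-Analysis.Analysis"
begin

definition usc_on :: "('y::metric_space) set \<Rightarrow> ('y \<Rightarrow> ('u::metric_space) set) \<Rightarrow> bool" where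
  "usc_on Y U \<longleftrightarrow> (\<forall>y\<in>Y. \<forall>W. open W \<and> U y \<subseteq> W \<longrightarrow>
      (\<exists>\<delta>>0. \<forall>y'\<in>Y. dist y' y < \<delta> \<longrightarrow> U y' \<subseteq> W))"

definition Aset :: "('y \<Rightarrow> 'u set) \<Rightarrow> ('y \<Rightarrow> 'u \<Rightarrow> 'y) \<Rightarrow> 'y set \<Rightarrow> 'y \<Rightarrow> 'u set" where
  "Aset U f Y y = {u \<in> U y. f y u \<in> Y}"

definition Gset :: "('y \<Rightarrow> 'u set) \<Rightarrow> ('y \<Rightarrow> 'u \<Rightarrow> 'y) \<Rightarrow> 'y set \<Rightarrow> ('y \<times> 'u) set" where
  "Gset U f Y = Sigma Y (Aset U f Y)"

primrec traj :: "('y \<Rightarrow> 'u \<Rightarrow> 'y) \<Rightarrow> 'y \<Rightarrow> (nat \<Rightarrow> 'u) \<Rightarrow> nat \<Rightarrow> 'y" where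
  "traj f y0 u 0 = y0"
| "traj f y0 u (Suc t) = f (traj f y0 u t) (u t)"

definition admissible :: "('y \<Rightarrow> 'u set) \<Rightarrow> ('y \<Rightarrow> 'u \<Rightarrow> 'y) \<Rightarrow> 'y set \<Rightarrow> nat \<Rightarrow> 'y \<Rightarrow> (nat \<Rightarrow> 'u) \<Rightarrow> bool" where
  "admissible U f Y T y0 u \<longleftrightarrow> (\<forall>t<T. u t \<in> Aset U f Y (traj f y0 u t))"

text \<open>V_T(y0) = (1/T) min over admissible controls of the accumulated cost
  (the minimum is attained under the standing assumptions, so it equals the infimum).\<close>
definition VT :: "('y \<Rightarrow> 'u set) \<Rightarrow> ('y \<Rightarrow> 'u \<Rightarrow> 'y) \<Rightarrow> ('y \<Rightarrow> 'u \<Rightarrow> real) \<Rightarrow> 'y set \<Rightarrow> nat \<Rightarrow> 'y \<Rightarrow> real" where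
  "VT U f k Y T y0 = (1 / real T) *
     Inf {(\<Sum>t<T. k (traj f y0 u t) (u t)) | u. admissible U f Y T y0 u}"

definition dual_feasible :: "('y::topological_space \<Rightarrow> 'u set) \<Rightarrow> ('y \<Rightarrow> 'u \<Rightarrow> 'y) \<Rightarrow> ('y \<Rightarrow> 'u \<Rightarrow> real) \<Rightarrow> 'y set \<Rightarrow> 'y
     \<Rightarrow> real \<Rightarrow> ('y \<Rightarrow> real) \<Rightarrow> ('y \<Rightarrow> real) \<Rightarrow> bool" where
  "dual_feasible U f k Y y0 \<mu> \<psi> \<eta> \<longleftrightarrow> continuous_on Y \<psi> \<and> continuous_on Y \<eta> \<and>
     (\<forall>(y,u)\<in>Gset U f Y. k y u + \<psi> y0 - \<psi> y + \<eta> (f y u) - \<eta> y - \<mu> \<ge> 0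
                          \<and> \<psi> (f y u) - \<psi> y \<ge> 0)"

definition dstar :: "('y::topological_space \<Rightarrow> 'u set) \<Rightarrow> ('y \<Rightarrow> 'u \<Rightarrow> 'y) \<Rightarrow> ('y \<Rightarrow> 'u \<Rightarrow> real) \<Rightarrow> 'y set \<Rightarrow> 'y \<Rightarrow> real" where
  "dstar U f k Y y0 = Sup {\<mu>. \<exists>\<psi> \<eta>. dual_feasible U f k Y y0 \<mu> \<psi> \<eta>}"

definition dual_optimal :: "('y::topological_space \<Rightarrow> 'u set) \<Rightarrow> ('y \<Rightarrow> 'u \<Rightarrow> 'y) \<Rightarrow> ('y \<Rightarrow> 'u \<Rightarrow> real) \<Rightarrow> 'y set \<Rightarrow> 'y
     \<Rightarrow> ('y \<Rightarrow> real) \<Rightarrow> ('y \<Rightarrow> real) \<Rightarrow> bool" where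
  "dual_optimal U f k Y y0 \<psi> \<eta> \<longleftrightarrow> continuous_on Y \<psi> \<and> continuous_on Y \<eta> \<and>
     (\<forall>(y,u)\<in>Gset U f Y. k y u + \<psi> y0 - \<psi> y + \<eta> (f y u) - \<eta> y \<ge> dstar U f k Y y0
                          \<and> \<psi> (f y u) - \<psi> y \<ge> 0)"

definition min_on_eq :: "'b set \<Rightarrow> ('b \<Rightarrow> real) \<Rightarrow> real \<Rightarrow> bool" where
  "min_on_eq S g c \<longleftrightarrow> (\<exists>p\<in>S. g p = c) \<and> (\<forall>p\<in>S. c \<le> g p)"

end

theory Submission
  imports Defs "HOL-Library.Diagonal_Subsequence"
begin

locale osys =
  fixes Y :: "'a::metric_space set" and U0 :: "'u::metric_space set"
    and U :: "'a \<Rightarrow> 'u set"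
    and f :: "'a \<Rightarrow> 'u \<Rightarrow> 'a" and k :: "'a \<Rightarrow> 'u \<Rightarrow> real"
    and V :: "'a \<Rightarrow> real" and y0 :: "'a"
  assumes Y_ne: "Y \<noteq> {}" and Y_cpt: "compact Y"
    and U0_cpt: "compact U0"
    and U_sub: "\<forall>y\<in>Y. U y \<subseteq> U0"
    and U_cpt: "\<forall>y\<in>Y. compact (U y)"
    and U_usc: "usc_on Y U"
    and f_cont: "continuous_on (UNIV \<times> U0) (\<lambda>(y,u). f y u)"
    and k_cont: "continuous_on (UNIV \<times> U0) (\<lambda>(y,u). k y u)"
    and A_ne: "\<forall>y\<in>Y. Aset U f Y y \<noteq> {}"
    and V_lim: "\<forall>y\<in>Y. (\<lambda>T. VT U f k Y T y) \<longlonglongrightarrow> V y"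
    and V_cont: "continuous_on Y V"
    and y0: "y0 \<in> Y"
begin

abbreviation "G \<equiv> Gset U f Y"

lemma G_iff: "(y,u) \<in> G \<longleftrightarrow> y \<in> Y \<and> u \<in> U y \<and> f y u \<in> Y"
  by (simp add: Gset_def Aset_def)

lemma G_sub: "G \<subseteq> Y \<times> U0"
  using U_sub by (force simp: Gset_def Aset_def)

lemma G_compact: "compact G"
proof -
  have cYU: "compact (Y \<times> U0)" using Y_cpt U0_cpt by (rule compact_Times)
  have "seq_compact G"
    unfolding seq_compact_def
  proof (intro allI impI)
    fix s :: "nat \<Rightarrow> 'a \<times> 'u" assume sG: "\<forall>n. s n \<in> G"
    then have "\<forall>n. s n \<in> Y \<times> U0" using G_sub by blast
    then obtain l r where l: "l \<in> Y \<times> U0" and r: "strict_mono r" and lim: "(s \<circ> r) \<longlonglongrightarrow> l"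
      using cYU unfolding compact_eq_seq_compact_metric seq_compact_def by blast
    obtain y u where lyu: "l = (y,u)" by (cases l)
    have yY: "y \<in> Y" and uU0: "u \<in> U0" using l lyu by auto
    have l1: "(\<lambda>n. fst (s (r n))) \<longlonglongrightarrow> y" using tendsto_fst[OF lim] lyu by (simp add: o_def)
    have l2: "(\<lambda>n. snd (s (r n))) \<longlonglongrightarrow> u" using tendsto_snd[OF lim] lyu by (simp add: o_def)
    have uU: "u \<in> U y"
    proof (rule ccontr)
      assume nu: "u \<notin> U y"
      have "closed (U y)" using U_cpt yY compact_imp_closed by blast
      then have "open (- U y)" by auto
      then obtain e where e: "e > 0" "ball u e \<subseteq> - U y" using nu
        by (meson ComplI open_contains_ball)
      define W where "W = - cball u (e/2)"
      have oW: "open W" unfolding W_def by auto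
      have sW: "U y \<subseteq> W" using e unfolding W_def by (auto simp: subset_iff dist_commute)
      obtain d where d: "d > 0" "\<forall>y'\<in>Y. dist y' y < d \<longrightarrow> U y' \<subseteq> W"
        using U_usc yY oW sW unfolding usc_on_def by blast
      have ev1: "eventually (\<lambda>n. dist (fst (s (r n))) y < d) sequentially"
        using l1 d(1) by (rule tendstoD)
      have ev2: "eventually (\<lambda>n. dist (snd (s (r n))) u < e/2) sequentially"
        using l2 e(1) by (intro tendstoD) auto
      obtain n where n1: "dist (fst (s (r n))) y < d" and n2: "dist (snd (s (r n))) u < e/2"
        using eventually_conj[OF ev1 ev2] eventually_sequentially by auto
      have inG: "s (r n) \<in> G" using sG by blast
      then have "fst (s (r n)) \<in> Y" "snd (s (r n)) \<in> U (fst (s (r n)))"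
        by (cases "s (r n)"; simp add: G_iff)+
      then have "snd (s (r n)) \<in> W" using d n1 by blast
      then show False using n2 unfolding W_def by (auto simp: dist_commute)
    qed
    have fl: "(\<lambda>n. (\<lambda>(y,u). f y u) (s (r n))) \<longlonglongrightarrow> (\<lambda>(y,u). f y u) l"
    proof (rule continuous_on_tendsto_compose[OF f_cont])
      show "(\<lambda>n. s (r n)) \<longlonglongrightarrow> l" using lim by (simp add: o_def)
      show "l \<in> UNIV \<times> U0" using l by auto
      show "\<forall>\<^sub>F n in sequentially. s (r n) \<in> UNIV \<times> U0"
        using \<open>\<forall>n. s n \<in> Y \<times> U0\<close> by (auto simp: mem_Times_iff)
    qed
    have "\<forall>n. (\<lambda>(y,u). f y u) (s (r n)) \<in> Y"
      using sG by (metis G_iff case_prod_conv surj_pair)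
    then have "f y u \<in> Y"
      using closed_sequentially[OF compact_imp_closed[OF Y_cpt] _ fl] lyu by auto
    then have "l \<in> G" using lyu yY uU by (simp add: G_iff)
    then show "\<exists>l\<in>G. \<exists>r. strict_mono r \<and> (s \<circ> r) \<longlonglongrightarrow> l" using r lim by blast
  qed
  then show ?thesis by (simp add: compact_eq_seq_compact_metric)
qed

lemma G_closed: "closed G" using G_compact compact_imp_closed by blast

lemma k_contG: "continuous_on G (\<lambda>(y,u). k y u)"
  using continuous_on_subset[OF k_cont] G_sub by blast

lemma f_contG: "continuous_on G (\<lambda>(y,u). f y u)"
  using continuous_on_subset[OF f_cont] G_sub by blast

lemma G_ne: "G \<noteq> {}"
  using A_ne y0 by (auto simp: Gset_def)

lemma k_bound: "\<exists>K>0. \<forall>y u. (y,u) \<in> G \<longrightarrow> \<bar>k y u\<bar> \<le> K"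
proof -
  have "compact ((\<lambda>(y,u). k y u) ` G)"
    using compact_continuous_image[OF k_contG G_compact] .
  then obtain B where B: "\<forall>x\<in>(\<lambda>(y,u). k y u) ` G. norm x \<le> B"
    using compact_imp_bounded bounded_iff by blast
  show ?thesis
    apply (rule exI[of _ "\<bar>B\<bar> + 1"]) using B by force
qed

end

context osys
begin

definition Kk where "Kk = (SOME K. K > 0 \<and> (\<forall>y u. (y,u) \<in> G \<longrightarrow> \<bar>k y u\<bar> \<le> K))"

lemma Kk: "Kk > 0" "(y,u) \<in> G \<Longrightarrow> \<bar>k y u\<bar> \<le> Kk"
  using someI_ex[OF k_bound] unfolding Kk_def by blast+

definition W where "W T y = Inf {(\<Sum>t<T. k (traj f y u t) (u t)) | u. admissible U f Y T y u}"

lemma VT_W: "VT U f k Y T y = W T y / real T"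
  by (simp add: VT_def W_def)

lemma traj_Y: "y \<in> Y \<Longrightarrow> admissible U f Y T y u \<Longrightarrow> t \<le> T \<Longrightarrow> traj f y u t \<in> Y"
proof (induction t)
  case 0 then show ?case by simp
next
  case (Suc t)
  then have "u t \<in> Aset U f Y (traj f y u t)" by (simp add: admissible_def)
  then show ?case by (simp add: Aset_def)
qed

lemma adm_G: "y \<in> Y \<Longrightarrow> admissible U f Y T y u \<Longrightarrow> t < T \<Longrightarrow> (traj f y u t, u t) \<in> G"
  using traj_Y[of y T u t] by (auto simp: admissible_def Gset_def)

lemma exists_adm: "y \<in> Y \<Longrightarrow> \<exists>u. \<forall>T. admissible U f Y T y u"
proof -
  assume yY: "y \<in> Y"
  define sel where "sel z = (SOME v. v \<in> Aset U f Y z)" for z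
  have sel: "z \<in> Y \<Longrightarrow> sel z \<in> Aset U f Y z" for z
    unfolding sel_def using A_ne by (simp add: some_in_eq)
  define zz where "zz = rec_nat y (\<lambda>_ z. f z (sel z))"
  have zz0: "zz 0 = y" and zzS: "zz (Suc n) = f (zz n) (sel (zz n))" for n by (simp_all add: zz_def)
  have zzY: "zz n \<in> Y" for n
    by (induction n) (use yY sel in \<open>auto simp: zz0 zzS Aset_def\<close>)
  define u where "u t = sel (zz t)" for t
  have tr: "traj f y u t = zz t" for t
    by (induction t) (simp_all add: zz0 zzS u_def)
  show ?thesis
    by (rule exI[of _ u]) (auto simp: admissible_def tr u_def intro: sel zzY)
qed

lemma sum_lb: "y \<in> Y \<Longrightarrow> admissible U f Y T y u \<Longrightarrow> - (real T * Kk) \<le> (\<Sum>t<T. k (traj f y u t) (u t))"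
proof -
  assume a: "y \<in> Y" "admissible U f Y T y u"
  have "\<And>t. t\<in>{..<T} \<Longrightarrow> - Kk \<le> k (traj f y u t) (u t)"
    using Kk(2)[OF adm_G[OF a]] by force
  from sum_bounded_below[of "{..<T}", OF this] show ?thesis by simp
qed

lemma W_le: "y \<in> Y \<Longrightarrow> admissible U f Y T y u \<Longrightarrow> W T y \<le> (\<Sum>t<T. k (traj f y u t) (u t))"
  unfolding W_def
  by (rule cInf_lower) (auto simp: bdd_below_def intro!: exI[of _ "- (real T * Kk)"] sum_lb)

lemma W_ge: "y \<in> Y \<Longrightarrow> (\<And>u. admissible U f Y T y u \<Longrightarrow> b \<le> (\<Sum>t<T. k (traj f y u t) (u t))) \<Longrightarrow> b \<le> W T y"
  unfolding W_def
  using exists_adm[of y] by (intro cInf_greatest) auto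

lemma traj_shift: "traj f y (\<lambda>t. case t of 0 \<Rightarrow> v | Suc n \<Rightarrow> u n) (Suc t) = traj f (f y v) u t"
  by (induction t) auto

lemma W_bellman: assumes G: "(y,v) \<in> G" shows "W (Suc T) y \<le> k y v + W T (f y v)"
proof -
  have yY: "y \<in> Y" and fY: "f y v \<in> Y" and vA: "v \<in> Aset U f Y y" using G by (auto simp: Gset_def Aset_def)
  have "W (Suc T) y - k y v \<le> W T (f y v)"
  proof (rule W_ge[OF fY])
    fix u assume adm: "admissible U f Y T (f y v) u"
    define u2 where "u2 = (\<lambda>t. case t of 0 \<Rightarrow> v | Suc n \<Rightarrow> u n)"
    have adm2: "admissible U f Y (Suc T) y u2"
      unfolding admissible_def
    proof (intro allI impI)
      fix t assume "t < Suc T"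
      show "u2 t \<in> Aset U f Y (traj f y u2 t)"
      proof (cases t)
        case 0 then show ?thesis using vA by (simp add: u2_def)
      next
        case (Suc n)
        have "traj f y u2 (Suc n) = traj f (f y v) u n" unfolding u2_def by (rule traj_shift)
        moreover have "u2 (Suc n) = u n" by (simp add: u2_def)
        moreover have "n < T" using Suc \<open>t < Suc T\<close> by simp
        ultimately show ?thesis using adm Suc by (simp add: admissible_def)
      qed
    qed
    have "(\<Sum>t<Suc T. k (traj f y u2 t) (u2 t)) = k y v + (\<Sum>t<T. k (traj f (f y v) u t) (u t))"
      by (subst sum.lessThan_Suc_shift) (simp add: u2_def del: traj.simps(2) add: traj_shift[unfolded u2_def])
    with W_le[OF yY adm2] show "W (Suc T) y - k y v \<le> (\<Sum>t<T. k (traj f (f y v) u t) (u t))" by simp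
  qed
  then show ?thesis by simp
qed

lemma V_mono: assumes G: "(y,v) \<in> G" shows "V y \<le> V (f y v)"
proof -
  have yY: "y \<in> Y" and fY: "f y v \<in> Y" using G by (auto simp: Gset_def Aset_def)
  have l1: "(\<lambda>T. VT U f k Y (Suc T) y) \<longlonglongrightarrow> V y"
    using V_lim yY LIMSEQ_Suc by blast
  have l2: "(\<lambda>T. k y v / real (Suc T) + real T / real (Suc T) * VT U f k Y T (f y v)) \<longlonglongrightarrow> 0 + 1 * V (f y v)"
    apply (intro tendsto_intros LIMSEQ_n_over_Suc_n)
    using LIMSEQ_Suc[OF lim_const_over_n[of "k y v"]] apply simp
    using V_lim fY by blast
  have "VT U f k Y (Suc T) y \<le> k y v / real (Suc T) + real T / real (Suc T) * VT U f k Y T (f y v)" for T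
  proof -
    have "W T (f y v) = real T * VT U f k Y T (f y v)"
    proof (cases "T = 0")
      case True
      obtain u0 where "admissible U f Y 0 (f y v) u0" using exists_adm[OF fY] by blast
      from W_le[OF fY this] have "W 0 (f y v) \<le> 0" by simp
      moreover have "0 \<le> W 0 (f y v)" by (rule W_ge[OF fY]) simp
      ultimately show ?thesis using True by simp
    qed (simp add: VT_W)
    then have "W (Suc T) y \<le> k y v + real T * VT U f k Y T (f y v)" using W_bellman[OF G, of T] by simp
    have "VT U f k Y (Suc T) y = W (Suc T) y / real (Suc T)" by (rule VT_W)
    also have "\<dots> \<le> (k y v + real T * VT U f k Y T (f y v)) / real (Suc T)"
      by (rule divide_right_mono) (fact, simp)
    also have "\<dots> = k y v / real (Suc T) + real T / real (Suc T) * VT U f k Y T (f y v)"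
      by (simp add: add_divide_distrib)
    finally show ?thesis .
  qed
  then show ?thesis using tendsto_le[OF trivial_limit_sequentially l2 l1] by simp
qed

lemma weak_duality:
  assumes F: "dual_feasible U f k Y y0 \<mu> \<psi> \<eta>" shows "\<mu> \<le> V y0"
proof -
  have etac: "continuous_on Y \<eta>" using F by (simp add: dual_feasible_def)
  obtain M where M: "\<forall>y\<in>Y. norm (\<eta> y) \<le> M"
  proof -
    have "bounded (\<eta> ` Y)" by (rule compact_imp_bounded[OF compact_continuous_image[OF etac Y_cpt]])
    then obtain M where "\<forall>x\<in>\<eta> ` Y. norm x \<le> M" unfolding bounded_iff by blast
    then show ?thesis using that by blast
  qed
  have FG: "\<And>y v. (y,v) \<in> G \<Longrightarrow> k y v + \<psi> y0 - \<psi> y + \<eta> (f y v) - \<eta> y - \<mu> \<ge> 0 \<and> \<psi> (f y v) - \<psi> y \<ge> 0"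
  proof -
    fix y v assume "(y,v) \<in> G"
    moreover have "\<forall>(y,v)\<in>G. k y v + \<psi> y0 - \<psi> y + \<eta> (f y v) - \<eta> y - \<mu> \<ge> 0 \<and> \<psi> (f y v) - \<psi> y \<ge> 0"
      using F unfolding dual_feasible_def by (rule conjunct2[OF conjunct2])
    ultimately show "k y v + \<psi> y0 - \<psi> y + \<eta> (f y v) - \<eta> y - \<mu> \<ge> 0 \<and> \<psi> (f y v) - \<psi> y \<ge> 0"
      by auto
  qed
  have low: "real T * \<mu> - 2 * M \<le> W T y0" for T
  proof (rule W_ge[OF y0])
    fix u assume adm: "admissible U f Y T y0 u"
    define z where "z t = traj f y0 u t" for t
    have zG: "t < T \<Longrightarrow> (z t, u t) \<in> G" for t using adm_G[OF y0 adm] z_def by simp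
    have zS: "z (Suc t) = f (z t) (u t)" for t by (simp add: z_def)
    have psi: "t \<le> T \<Longrightarrow> \<psi> y0 \<le> \<psi> (z t)" for t
    proof (induction t)
      case 0 then show ?case by (simp add: z_def)
    next
      case (Suc t)
      then have "t < T" by simp
      from FG[OF zG[OF this]] Suc show ?case unfolding zS[of t] by simp
    qed
    have each: "t < T \<Longrightarrow> \<mu> - (\<eta> (z (Suc t)) - \<eta> (z t)) \<le> k (z t) (u t)" for t
      using FG[OF zG[of t]] psi[of t] unfolding zS[of t] by simp
    have "(\<Sum>t<T. \<mu> - (\<eta> (z (Suc t)) - \<eta> (z t))) \<le> (\<Sum>t<T. k (z t) (u t))"
      by (rule sum_mono) (use each in auto)
    also have "(\<Sum>t<T. \<mu> - (\<eta> (z (Suc t)) - \<eta> (z t))) = real T * \<mu> - (\<eta> (z T) - \<eta> (z 0))"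
      using sum_lessThan_telescope[of "\<lambda>t. \<eta> (z t)" T] by (simp add: sum_subtractf)
    finally have "real T * \<mu> - (\<eta> (z T) - \<eta> (z 0)) \<le> (\<Sum>t<T. k (z t) (u t))" .
    moreover have "\<bar>\<eta> (z T)\<bar> \<le> M" "\<bar>\<eta> (z 0)\<bar> \<le> M"
      using M traj_Y[OF y0 adm, of T] y0 by (auto simp: z_def)
    ultimately show "real T * \<mu> - 2 * M \<le> (\<Sum>t<T. k (traj f y0 u t) (u t))"
      unfolding z_def by linarith
  qed
  have l1: "(\<lambda>T. \<mu> - 2 * M / real T) \<longlonglongrightarrow> \<mu> - 0"
    by (intro tendsto_intros)
  have ev: "\<forall>\<^sub>F T in sequentially. \<mu> - 2 * M / real T \<le> VT U f k Y T y0"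
  proof (rule eventually_sequentiallyI[of 1])
    fix T :: nat assume "1 \<le> T"
    then have "real T * \<mu> - 2 * M \<le> W T y0" "real T > 0" using low by auto
    then have "(real T * \<mu> - 2 * M) / real T \<le> W T y0 / real T"
      by (intro divide_right_mono) auto
    moreover have "(real T * \<mu> - 2 * M) / real T = \<mu> - 2 * M / real T"
      using \<open>real T > 0\<close> by (simp add: diff_divide_distrib)
    ultimately show "\<mu> - 2 * M / real T \<le> VT U f k Y T y0" unfolding VT_W by simp
  qed
  show ?thesis using tendsto_le[OF trivial_limit_sequentially _ l1 ev] V_lim y0 by simp
qed

end

lemma rising_sun: "\<exists>s\<le>T. \<forall>n\<le>T. (S::nat\<Rightarrow>real) n \<le> S s"
proof (induction T)
  case 0 then show ?case by auto
next
  case (Suc T)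
  then obtain s where s: "s \<le> T" "\<forall>n\<le>T. S n \<le> S s" by blast
  show ?case
  proof (cases "S (Suc T) \<le> S s")
    case True then show ?thesis using s by (intro exI[of _ s]) (auto simp: le_Suc_eq)
  next
    case False then show ?thesis using s by (intro exI[of _ "Suc T"]) (force simp: le_Suc_eq)
  qed
qed

lemma sum_split_at: "(\<Sum>t<s + d. g t) = (\<Sum>t<s. g t) + (\<Sum>t<d. g (s + t)) " for g :: "nat \<Rightarrow> real"
  by (induction d) auto

lemma diag_conv:
  fixes p :: "nat \<Rightarrow> nat \<Rightarrow> 'b::metric_space"
  assumes K: "compact K" and pK: "\<And>j t. p j t \<in> K"
  shows "\<exists>r q. strict_mono r \<and> (\<forall>t. q t \<in> K \<and> (\<lambda>i. p (r i) t) \<longlonglongrightarrow> q t)"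
proof -
  define P where "P t s \<longleftrightarrow> (\<exists>l\<in>K. (\<lambda>i. p (s i) t) \<longlonglongrightarrow> l)" for t and s :: "nat \<Rightarrow> nat"
  interpret subseqs P
  proof
    fix t and s :: "nat \<Rightarrow> nat" assume "strict_mono s"
    have "\<forall>i. p (s i) t \<in> K" using pK by blast
    then obtain l r' where "l \<in> K" "strict_mono r'" "((\<lambda>i. p (s i) t) \<circ> r') \<longlonglongrightarrow> l"
      using K unfolding compact_eq_seq_compact_metric seq_compact_def by meson
    then show "\<exists>r'. strict_mono r' \<and> P t (s \<circ> r')"
      unfolding P_def by (intro exI[of _ r']) (auto simp: o_def)
  qed
  have stable: "strict_mono r \<Longrightarrow> P n s \<Longrightarrow> P n (s \<circ> r)" for r s n
    unfolding P_def using LIMSEQ_subseq_LIMSEQ by (fastforce simp: o_def)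
  have "P t diagseq" for t
  proof -
    from diagseq_holds[OF stable, of t] obtain l where l: "l \<in> K" "(\<lambda>i. p (diagseq (Suc t + i)) t) \<longlonglongrightarrow> l"
      unfolding P_def by (auto simp: o_def)
    have "(\<lambda>i. p (diagseq (i + Suc t)) t) \<longlonglongrightarrow> l" using l(2) by (simp add: add.commute)
    then have "(\<lambda>i. p (diagseq i) t) \<longlonglongrightarrow> l" by (rule LIMSEQ_offset)
    then show ?thesis unfolding P_def using l(1) by blast
  qed
  then have "\<forall>t. \<exists>l. l \<in> K \<and> (\<lambda>i. p (diagseq i) t) \<longlonglongrightarrow> l" unfolding P_def by blast
  then obtain q where "\<forall>t. q t \<in> K \<and> (\<lambda>i. p (diagseq i) t) \<longlonglongrightarrow> q t" by metis
  then show ?thesis using subseq_diagseq by blast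
qed

context osys
begin

definition chain :: "real \<Rightarrow> (nat \<Rightarrow> 'a) \<Rightarrow> (nat \<Rightarrow> 'u) \<Rightarrow> nat \<Rightarrow> bool" where
  "chain \<delta> z u T \<longleftrightarrow> (\<forall>t<T. (z t, u t) \<in> G) \<and> (\<forall>t. Suc t < T \<longrightarrow> dist (z (Suc t)) (f (z t) (u t)) \<le> \<delta>)"

end

context osys
begin

lemma key:
  assumes eps: "\<epsilon> > 0"
  shows "\<exists>\<delta>>0. \<exists>L\<ge>0. \<exists>B. \<forall>z u T. chain \<delta> z u T \<longrightarrow>
           - B \<le> (\<Sum>t<T. k (z t) (u t) + L * max 0 (V y0 - V (z t)) - (V y0 - \<epsilon>))"
proof (rule ccontr)
  assume neg: "\<not> ?thesis"
  define c where "c = V y0 - \<epsilon>"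
  define Kc where "Kc = Kk + \<bar>c\<bar>"
  have Kc: "Kc > 0" using Kk(1) by (simp add: Kc_def)
  define x where "x j z u t = k (z t) (u t) + real j * max 0 (V y0 - V (z t)) - c"
    for j :: nat and z :: "nat \<Rightarrow> 'a" and u :: "nat \<Rightarrow> 'u" and t
  have "\<forall>j::nat. \<exists>z u T. chain (1 / (real j + 1)) z u T \<and> (\<Sum>t<T. x j z u t) < - (real j * Kc)"
  proof
    fix j :: nat
    have "1 / (real j + 1) > 0" "real j \<ge> 0" by auto
    have H: "\<And>\<delta> L B. \<delta> > 0 \<Longrightarrow> L \<ge> 0 \<Longrightarrow> \<exists>z u T. chain \<delta> z u T \<and>
           \<not> (- B \<le> (\<Sum>t<T. k (z t) (u t) + L * max 0 (V y0 - V (z t)) - (V y0 - \<epsilon>)))"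
      using neg by blast
    from H[OF \<open>1 / (real j + 1) > 0\<close> \<open>real j \<ge> 0\<close>, of "real j * Kc"]
    obtain z u T where "chain (1 / (real j + 1)) z u T"
      "\<not> (- (real j * Kc) \<le> (\<Sum>t<T. k (z t) (u t) + real j * max 0 (V y0 - V (z t)) - (V y0 - \<epsilon>)))"
      by blast
    then show "\<exists>z u T. chain (1 / (real j + 1)) z u T \<and> (\<Sum>t<T. x j z u t) < - (real j * Kc)"
      unfolding x_def c_def by (intro exI conjI) (auto simp: not_le)
  qed
  then obtain zs us Ts where ch: "\<And>j. chain (1 / (real j + 1)) (zs j) (us j) (Ts j)"
    and neg_sum: "\<And>j. (\<Sum>t<Ts j. x j (zs j) (us j) t) < - (real j * Kc)"
    by metis
  have xlow: "t < Ts j \<Longrightarrow> - Kc \<le> x j (zs j) (us j) t" for j t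
  proof -
    assume "t < Ts j"
    then have "(zs j t, us j t) \<in> G" using ch[of j] by (simp add: chain_def)
    then have "\<bar>k (zs j t) (us j t)\<bar> \<le> Kk" by (rule Kk(2))
    moreover have "real j * max 0 (V y0 - V (zs j t)) \<ge> 0" by simp
    ultimately show ?thesis unfolding x_def Kc_def by linarith
  qed
  define S where "S j n = (\<Sum>t<n. x j (zs j) (us j) t)" for j n
  have "\<forall>j. \<exists>s\<le>Ts j. \<forall>n\<le>Ts j. S j n \<le> S j s" using rising_sun by blast
  then obtain ss where ss: "\<And>j. ss j \<le> Ts j" "\<And>j n. n \<le> Ts j \<Longrightarrow> S j n \<le> S j (ss j)" by metis
  define N where "N j = Ts j - ss j" for j
  have split: "S j (ss j + d) = S j (ss j) + (\<Sum>t<d. x j (zs j) (us j) (ss j + t))" for j d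
    unfolding S_def by (rule sum_split_at)
  have N_gt: "j < N j" for j
  proof -
    have TsN: "Ts j = ss j + N j" using ss(1)[of j] by (simp add: N_def)
    have "(\<Sum>t<N j. - Kc) \<le> (\<Sum>t<N j. x j (zs j) (us j) (ss j + t))"
      by (rule sum_mono) (use xlow TsN in auto)
    then have "- (real (N j) * Kc) \<le> S j (Ts j) - S j (ss j)"
      using split[of j "N j"] TsN by simp
    moreover have "S j 0 \<le> S j (ss j)" using ss(2)[of 0 j] by simp
    moreover have "S j 0 = 0" by (simp add: S_def)
    moreover have "S j (Ts j) < - (real j * Kc)" using neg_sum by (simp add: S_def)
    ultimately have "real j * Kc < real (N j) * Kc" by linarith
    then show ?thesis using Kc by simp
  qed
  have win: "m \<le> N j \<Longrightarrow> (\<Sum>t<m. x j (zs j) (us j) (ss j + t)) \<le> 0" for m j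
  proof -
    assume "m \<le> N j"
    then have "ss j + m \<le> Ts j" using ss(1)[of j] by (simp add: N_def)
    then show ?thesis using ss(2)[of "ss j + m" j] split[of j m] by simp
  qed
  obtain g0 where g0: "g0 \<in> G" using G_ne by blast
  define p where "p j t = (if t < N j then (zs j (ss j + t), us j (ss j + t)) else g0)" for j t
  have pG: "p j t \<in> G" for j t
    using ch[of j] g0 by (auto simp: p_def chain_def N_def)
  obtain r q where r: "strict_mono r" and qG: "\<And>t. q t \<in> G" and qlim: "\<And>t. (\<lambda>i. p (r i) t) \<longlonglongrightarrow> q t"
  proof -
    have "\<exists>r q. strict_mono r \<and> (\<forall>t. q t \<in> G \<and> (\<lambda>i. p (r i) t) \<longlonglongrightarrow> q t)"
      by (rule diag_conv[OF G_compact]) (rule pG)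
    then show ?thesis using that by blast
  qed
  have ri: "i \<le> r i" for i using r by (rule seq_suble)
  define fp where "fp = (\<lambda>(y::'a,u::'u). f y u)"
  define kp where "kp = (\<lambda>(y::'a,u::'u). k y u)"
  have dyn: "fst (q (Suc t)) = f (fst (q t)) (snd (q t))" for t
  proof -
    have l1: "(\<lambda>i. dist (fst (p (r i) (Suc t))) (fp (p (r i) t))) \<longlonglongrightarrow> dist (fst (q (Suc t))) (fp (q t))"
    proof (intro tendsto_dist tendsto_fst qlim)
      show "(\<lambda>i. fp (p (r i) t)) \<longlonglongrightarrow> fp (q t)"
        using continuous_on_tendsto_compose[OF f_contG[folded fp_def] qlim qG] pG by auto
    qed
    have l2: "(\<lambda>i. 1 / (real i + 1)) \<longlonglongrightarrow> 0"
      using LIMSEQ_inverse_real_of_nat by (simp add: inverse_eq_divide add.commute)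
    have ev: "\<forall>\<^sub>F i in sequentially. dist (fst (p (r i) (Suc t))) (fp (p (r i) t)) \<le> 1 / (real i + 1)"
    proof (rule eventually_sequentiallyI[of "Suc t"])
      fix i assume i: "Suc t \<le> i"
      then have lt: "Suc t < N (r i)" using ri[of i] N_gt[of "r i"] by linarith
      then have "dist (zs (r i) (Suc (ss (r i) + t))) (f (zs (r i) (ss (r i) + t)) (us (r i) (ss (r i) + t))) \<le> 1 / (real (r i) + 1)"
        using ch[of "r i"] unfolding chain_def N_def by auto
      also have "\<dots> \<le> 1 / (real i + 1)" using ri[of i] by (simp add: frac_le)
      finally show "dist (fst (p (r i) (Suc t))) (fp (p (r i) t)) \<le> 1 / (real i + 1)"
        using lt by (simp add: p_def fp_def)
    qed
    have "dist (fst (q (Suc t))) (fp (q t)) \<le> 0"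
      using tendsto_le[OF trivial_limit_sequentially l2 l1 ev] .
    then show ?thesis by (simp add: fp_def case_prod_beta)
  qed
  have cost: "(\<Sum>t<m. kp (q t) - c) \<le> 0" for m
  proof -
    have l1: "(\<lambda>i. \<Sum>t<m. kp (p (r i) t) - c) \<longlonglongrightarrow> (\<Sum>t<m. kp (q t) - c)"
    proof (intro tendsto_sum tendsto_diff tendsto_const)
      fix t show "(\<lambda>i. kp (p (r i) t)) \<longlonglongrightarrow> kp (q t)"
        using continuous_on_tendsto_compose[OF k_contG[folded kp_def] qlim qG] pG by auto
    qed
    show ?thesis
    proof (rule LIMSEQ_le_const2[OF l1], intro exI[of _ m] allI impI)
      fix i assume "m \<le> i"
      then have mN: "m \<le> N (r i)" using ri[of i] N_gt[of "r i"] by linarith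
      have "(\<Sum>t<m. kp (p (r i) t) - c) \<le> (\<Sum>t<m. x (r i) (zs (r i)) (us (r i)) (ss (r i) + t))"
      proof (rule sum_mono)
        fix t assume "t \<in> {..<m}"
        then have "t < N (r i)" using mN by simp
        then show "kp (p (r i) t) - c \<le> x (r i) (zs (r i)) (us (r i)) (ss (r i) + t)"
          by (simp add: p_def kp_def x_def)
      qed
      also have "\<dots> \<le> 0" using win[OF mN] .
      finally show "(\<Sum>t<m. kp (p (r i) t) - c) \<le> 0" .
    qed
  qed
  have pen: "max 0 (V y0 - V (fst (q 0))) \<le> 0"
  proof -
    have fq0: "fst (q 0) \<in> Y" using qG[of 0] by (cases "q 0") (simp add: G_iff)
    have fpY: "fst (p (r i) 0) \<in> Y" for i using pG[of "r i" 0] by (cases "p (r i) 0") (simp add: G_iff)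
    have l1: "(\<lambda>i. max 0 (V y0 - V (fst (p (r i) 0)))) \<longlonglongrightarrow> max 0 (V y0 - V (fst (q 0)))"
    proof (intro tendsto_max tendsto_const tendsto_diff)
      show "(\<lambda>i. V (fst (p (r i) 0))) \<longlonglongrightarrow> V (fst (q 0))"
        using continuous_on_tendsto_compose[OF V_cont tendsto_fst[OF qlim] fq0] fpY by auto
    qed
    have l2: "(\<lambda>i. Kc / real i) \<longlonglongrightarrow> 0" by (rule lim_const_over_n)
    have ev: "\<forall>\<^sub>F i in sequentially. max 0 (V y0 - V (fst (p (r i) 0))) \<le> Kc / real i"
    proof (rule eventually_sequentiallyI[of 1])
      fix i :: nat assume i: "1 \<le> i"
      have N1: "1 \<le> N (r i)" using N_gt[of "r i"] by linarith
      have "x (r i) (zs (r i)) (us (r i)) (ss (r i)) \<le> 0" using win[OF N1] by simp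
      moreover have "(zs (r i) (ss (r i)), us (r i) (ss (r i))) \<in> G" using pG[of "r i" 0] N1 by (simp add: p_def)
      then have "\<bar>k (zs (r i) (ss (r i))) (us (r i) (ss (r i)))\<bar> \<le> Kk" by (rule Kk(2))
      ultimately have "real (r i) * max 0 (V y0 - V (zs (r i) (ss (r i)))) \<le> Kc"
        unfolding x_def Kc_def by linarith
      moreover have "real i * max 0 (V y0 - V (zs (r i) (ss (r i)))) \<le> real (r i) * max 0 (V y0 - V (zs (r i) (ss (r i))))"
        using ri[of i] by (intro mult_right_mono) auto
      ultimately have "real i * max 0 (V y0 - V (zs (r i) (ss (r i)))) \<le> Kc" by linarith
      moreover have gen: "\<And>a b (c::real). c > 0 \<Longrightarrow> c * a \<le> b \<Longrightarrow> a \<le> b / c"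
        by (simp add: pos_le_divide_eq mult.commute)
      moreover have "real i > 0" using i by simp
      ultimately have "max 0 (V y0 - V (zs (r i) (ss (r i)))) \<le> Kc / real i"
        by blast
      then show "max 0 (V y0 - V (fst (p (r i) 0))) \<le> Kc / real i"
        using N1 by (simp add: p_def)
    qed
    show ?thesis using tendsto_le[OF trivial_limit_sequentially l2 l1 ev] by simp
  qed
  define zst where "zst = fst (q 0)"
  define ust where "ust t = snd (q t)" for t
  have zY: "zst \<in> Y" using qG[of 0] by (cases "q 0") (simp add: G_iff zst_def)
  have tr: "traj f zst ust t = fst (q t)" for t
    by (induction t) (simp_all add: zst_def ust_def dyn)
  have adm: "admissible U f Y m zst ust" for m
    unfolding admissible_def
  proof (intro allI impI)
    fix t show "ust t \<in> Aset U f Y (traj f zst ust t)"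
      using qG[of t] by (cases "q t") (simp add: tr ust_def Gset_def)
  qed
  have Vz: "V zst \<le> c"
  proof (rule LIMSEQ_le_const2)
    show "(\<lambda>T. VT U f k Y T zst) \<longlonglongrightarrow> V zst" using V_lim zY by blast
    show "\<exists>N. \<forall>n\<ge>N. VT U f k Y n zst \<le> c"
    proof (intro exI[of _ 1] allI impI)
      fix m :: nat assume m: "1 \<le> m"
      have "W m zst \<le> (\<Sum>t<m. k (traj f zst ust t) (ust t))" by (rule W_le[OF zY adm])
      also have "\<dots> = (\<Sum>t<m. kp (q t))" by (simp add: tr ust_def kp_def case_prod_beta)
      also have "\<dots> \<le> real m * c" using cost[of m] by (simp add: sum_subtractf)
      finally have "W m zst / real m \<le> c" using m by (simp add: field_simps)
      then show "VT U f k Y m zst \<le> c" by (simp add: VT_W)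
    qed
  qed
  have "V y0 \<le> V zst" using pen by (simp add: zst_def)
  then show False using Vz eps by (simp add: c_def)
qed

end

context osys
begin

lemma strong:
  assumes eps: "\<epsilon> > 0"
  shows "\<exists>\<psi> \<eta>. dual_feasible U f k Y y0 (V y0 - \<epsilon>) \<psi> \<eta>"
proof -
  obtain \<delta> L B where dpos: "\<delta> > 0" and L: "L \<ge> 0" and KB: "\<And>z u T. chain \<delta> z u T \<Longrightarrow>
           - B \<le> (\<Sum>t<T. k (z t) (u t) + L * max 0 (V y0 - V (z t)) - (V y0 - \<epsilon>))"
    using key[OF eps] by blast
  define c where "c = V y0 - \<epsilon>"
  define kt where "kt y v = k y v + L * max 0 (V y0 - V y) - c" for y v
  define CH where "CH w = {(\<Sum>t<T. kt (z t) (u t)) | z u T. chain \<delta> z u T \<and> z 0 = w}" for w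
  define \<Phi> where "\<Phi> w = Inf (CH w)" for w
  have CH0: "0 \<in> CH w" for w
  proof -
    have "chain \<delta> (\<lambda>_. w) (\<lambda>_. undefined) 0" by (simp add: chain_def)
    then show ?thesis unfolding CH_def by force
  qed
  have CHlow: "s \<in> CH w \<Longrightarrow> - B \<le> s" for s w
    using KB unfolding CH_def kt_def c_def by blast
  have CHbdd: "bdd_below (CH w)" for w using CHlow by (auto simp: bdd_below_def)
  have Phi_le: "\<Phi> w \<le> 0" for w unfolding \<Phi>_def using CH0 CHbdd by (rule cInf_lower)
  have Phi_ge: "- B \<le> \<Phi> w" for w unfolding \<Phi>_def using CH0 CHlow by (intro cInf_greatest) auto
  have B0: "0 \<le> B" using Phi_le[of y0] Phi_ge[of y0] by linarith
  have ext: "\<Phi> y \<le> kt y v + \<Phi> w" if G: "(y,v) \<in> G" and d: "dist w (f y v) \<le> \<delta>" for y v w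
  proof -
    have "\<Phi> y - kt y v \<le> \<Phi> w"
      unfolding \<Phi>_def[of w]
    proof (rule cInf_greatest)
      show "CH w \<noteq> {}" using CH0 by blast
      fix s assume "s \<in> CH w"
      then obtain z u T where s: "s = (\<Sum>t<T. kt (z t) (u t))" and ch: "chain \<delta> z u T" and z0: "z 0 = w"
        unfolding CH_def by blast
      define z2 where "z2 = case_nat y z"
      define u2 where "u2 = case_nat v u"
      have ch2: "chain \<delta> z2 u2 (Suc T)"
        unfolding chain_def
      proof (intro conjI allI impI)
        fix t assume "t < Suc T"
        then show "(z2 t, u2 t) \<in> G" using G ch by (cases t) (auto simp: z2_def u2_def chain_def)
      next
        fix t assume "Suc t < Suc T"
        then show "dist (z2 (Suc t)) (f (z2 t) (u2 t)) \<le> \<delta>"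
          using d ch z0 by (cases t) (auto simp: z2_def u2_def chain_def)
      qed
      have "(\<Sum>t<Suc T. kt (z2 t) (u2 t)) = kt y v + s"
        by (subst sum.lessThan_Suc_shift) (simp add: z2_def u2_def s)
      moreover have "(\<Sum>t<Suc T. kt (z2 t) (u2 t)) \<in> CH y"
        unfolding CH_def using ch2 by (force simp: z2_def)
      ultimately have "\<Phi> y \<le> kt y v + s" unfolding \<Phi>_def using CHbdd cInf_lower by metis
      then show "\<Phi> y - kt y v \<le> s" by simp
    qed
    then show ?thesis by simp
  qed
  define Kc where "Kc = Kk + \<bar>c\<bar>"
  have kt_low: "(y,v) \<in> G \<Longrightarrow> - kt y v \<le> Kc" for y v
  proof -
    assume "(y,v) \<in> G"
    then have "\<bar>k y v\<bar> \<le> Kk" by (rule Kk(2))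
    moreover have "L * max 0 (V y0 - V y) \<ge> 0" using L by simp
    ultimately show ?thesis unfolding kt_def Kc_def by linarith
  qed
  have Kc0: "Kc > 0" using Kk(1) by (simp add: Kc_def)
  define Lc where "Lc = (B + Kc) / \<delta>"
  have Lc0: "Lc \<ge> 0" using B0 Kc0 dpos by (simp add: Lc_def)
  have Lcd: "Lc * \<delta> = B + Kc" using dpos by (simp add: Lc_def)
  define \<eta> where "\<eta> y = Inf ((\<lambda>w. \<Phi> w + Lc * dist y w) ` UNIV)" for y
  have eta_bdd: "bdd_below ((\<lambda>w. \<Phi> w + Lc * dist y w) ` UNIV)" for y
  proof -
    have "\<forall>w. - B \<le> \<Phi> w + Lc * dist y w" using Phi_ge Lc0 by (simp add: add_increasing2)
    then show ?thesis by (auto simp: bdd_below_def)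
  qed
  have eta_le: "\<eta> y \<le> \<Phi> w + Lc * dist y w" for y w
    unfolding \<eta>_def by (rule cInf_lower[OF _ eta_bdd]) simp
  have eta_lip: "\<eta> y \<le> \<eta> y' + Lc * dist y y'" for y y'
  proof -
    have "\<eta> y - Lc * dist y y' \<le> \<eta> y'"
      unfolding \<eta>_def[of y']
    proof (rule cInf_greatest)
      show "range (\<lambda>w. \<Phi> w + Lc * dist y' w) \<noteq> {}" by simp
      fix s assume "s \<in> range (\<lambda>w. \<Phi> w + Lc * dist y' w)"
      then obtain w where s: "s = \<Phi> w + Lc * dist y' w" by blast
      have "dist y w \<le> dist y y' + dist y' w" by (rule dist_triangle)
      then have "Lc * dist y w \<le> Lc * dist y y' + Lc * dist y' w"
        using Lc0 by (metis distrib_left mult_left_mono)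
      then show "\<eta> y - Lc * dist y y' \<le> s" using eta_le[of y w] s by linarith
    qed
    then show ?thesis by simp
  qed
  have eta_cont: "continuous_on Y \<eta>"
  proof (rule lipschitz_on_continuous_on)
    show "Lc-lipschitz_on Y \<eta>"
      unfolding lipschitz_on_def
    proof (intro conjI Lc0 ballI)
      fix x y assume "x \<in> Y" "y \<in> Y"
      show "dist (\<eta> x) (\<eta> y) \<le> Lc * dist x y"
        using eta_lip[of x y] eta_lip[of y x] by (simp add: dist_real_def dist_commute abs_le_iff)
    qed
  qed
  have eta_ineq: "\<eta> y \<le> kt y v + \<eta> (f y v)" if G: "(y,v) \<in> G" for y v
  proof -
    have "\<eta> y - kt y v \<le> \<eta> (f y v)"
      unfolding \<eta>_def[of "f y v"]
    proof (rule cInf_greatest)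
      show "range (\<lambda>w. \<Phi> w + Lc * dist (f y v) w) \<noteq> {}" by simp
      fix s assume "s \<in> range (\<lambda>w. \<Phi> w + Lc * dist (f y v) w)"
      then obtain w where s: "s = \<Phi> w + Lc * dist (f y v) w" by blast
      have ey: "\<eta> y \<le> \<Phi> y" using eta_le[of y y] by simp
      show "\<eta> y - kt y v \<le> s"
      proof (cases "dist w (f y v) \<le> \<delta>")
        case True
        have "\<Phi> y \<le> kt y v + \<Phi> w" by (rule ext[OF G True])
        moreover have "0 \<le> Lc * dist (f y v) w" using Lc0 by simp
        ultimately show ?thesis using ey s by linarith
      next
        case False
        then have "Lc * \<delta> \<le> Lc * dist (f y v) w" using Lc0 by (intro mult_left_mono) (auto simp: dist_commute)
        then have "B + Kc \<le> Lc * dist (f y v) w" using Lcd by simp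
        then show ?thesis using ey s Phi_le[of y] Phi_ge[of w] kt_low[OF G] by linarith
      qed
    qed
    then show ?thesis by simp
  qed
  define \<psi> where "\<psi> y = L * min (V y) (V y0)" for y
  have psi_cont: "continuous_on Y \<psi>"
    unfolding \<psi>_def by (intro continuous_on_mult continuous_on_const continuous_on_min V_cont)
  have "dual_feasible U f k Y y0 c \<psi> \<eta>"
    unfolding dual_feasible_def
  proof (intro conjI psi_cont eta_cont ballI)
    fix p assume pG: "p \<in> G"
    obtain y v where p: "p = (y,v)" by (cases p)
    have G: "(y,v) \<in> G" using pG p by simp
    have a: "\<psi> y0 - \<psi> y = L * max 0 (V y0 - V y)"
      unfolding \<psi>_def by (simp add: max_def min_def algebra_simps)
    have b: "\<psi> y \<le> \<psi> (f y v)"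
      unfolding \<psi>_def using V_mono[OF G] L by (intro mult_left_mono) auto
    have "0 \<le> k y v + \<psi> y0 - \<psi> y + \<eta> (f y v) - \<eta> y - c"
      using eta_ineq[OF G] a unfolding kt_def by linarith
    then show "case p of (y, u) \<Rightarrow> 0 \<le> k y u + \<psi> y0 - \<psi> y + \<eta> (f y u) - \<eta> y - c \<and> 0 \<le> \<psi> (f y u) - \<psi> y"
      using b p by simp
  qed
  then show ?thesis unfolding c_def by blast
qed

lemma dstar_eq: "dstar U f k Y y0 = V y0"
proof -
  define S where "S = {\<mu>. \<exists>\<psi> \<eta>. dual_feasible U f k Y y0 \<mu> \<psi> \<eta>}"
  have ne: "S \<noteq> {}" using strong[of 1] by (auto simp: S_def)
  have ub: "\<And>x. x \<in> S \<Longrightarrow> x \<le> V y0" using weak_duality by (auto simp: S_def)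
  have bdd: "bdd_above S" using ub by (auto simp: bdd_above_def)
  have "Sup S \<le> V y0" using ne ub by (rule cSup_least)
  moreover have "V y0 \<le> Sup S"
  proof (rule field_le_epsilon)
    fix e :: real assume "e > 0"
    then have "V y0 - e \<in> S" using strong[of e] by (auto simp: S_def)
    then have "V y0 - e \<le> Sup S" using bdd by (rule cSup_upper)
    then show "V y0 \<le> Sup S + e" by simp
  qed
  ultimately show ?thesis by (simp add: dstar_def S_def)
qed

end

context osys
begin

lemma main:
  shows
    "(\<forall>\<psi> \<eta>. continuous_on Y \<psi> \<and> continuous_on Y \<eta> \<longrightarrow>
        (dual_optimal U f k Y y0 \<psi> \<eta> \<longleftrightarrow>
           (\<forall>(y,u)\<in>Gset U f Y. \<psi> (f y u) - \<psi> y \<ge> 0) \<and>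
           min_on_eq (Gset U f Y) (\<lambda>(y,u). k y u - \<psi> y + \<eta> (f y u) - \<eta> y) (V y0 - \<psi> y0)))
     \<and>
     (\<forall>\<eta>. continuous_on Y \<eta> \<and>
          min_on_eq (Gset U f Y) (\<lambda>(y,u). k y u - V y + \<eta> (f y u) - \<eta> y) 0
          \<longrightarrow> dual_optimal U f k Y y0 V \<eta>)"
proof (intro conjI allI impI)
  fix \<psi> \<eta> :: "'a \<Rightarrow> real" assume cont: "continuous_on Y \<psi> \<and> continuous_on Y \<eta>"
  then have pc: "continuous_on Y \<psi>" and ec: "continuous_on Y \<eta>" by auto
  define g where "g = (\<lambda>(y,u). k y u - \<psi> y + \<eta> (f y u) - \<eta> y)"
  have gc: "continuous_on G g"
  proof -
    have 1: "continuous_on G (\<lambda>p. \<psi> (fst p))"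
      by (rule continuous_on_compose2[OF pc continuous_on_fst]) (auto simp: Gset_def)
    have 2: "continuous_on G (\<lambda>p. \<eta> (fst p))"
      by (rule continuous_on_compose2[OF ec continuous_on_fst]) (auto simp: Gset_def)
    have 3: "continuous_on G (\<lambda>p. \<eta> ((\<lambda>(y,u). f y u) p))"
      by (rule continuous_on_compose2[OF ec f_contG]) (auto simp: Gset_def Aset_def)
    have "continuous_on G (\<lambda>p. (\<lambda>(y,u). k y u) p - \<psi> (fst p) + \<eta> ((\<lambda>(y,u). f y u) p) - \<eta> (fst p))"
      by (intro continuous_on_diff continuous_on_add k_contG 1 2 3)
    then show ?thesis unfolding g_def by (simp add: case_prod_beta)
  qed
  have gG: "(y,u) \<in> G \<Longrightarrow> g (y,u) = k y u - \<psi> y + \<eta> (f y u) - \<eta> y" for y u by (simp add: g_def)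
  show "dual_optimal U f k Y y0 \<psi> \<eta> \<longleftrightarrow>
           (\<forall>(y,u)\<in>G. \<psi> (f y u) - \<psi> y \<ge> 0) \<and>
           min_on_eq G (\<lambda>(y,u). k y u - \<psi> y + \<eta> (f y u) - \<eta> y) (V y0 - \<psi> y0)"
    unfolding g_def[symmetric]
  proof
    assume opt: "dual_optimal U f k Y y0 \<psi> \<eta>"
    have H: "\<forall>(y,u)\<in>G. k y u + \<psi> y0 - \<psi> y + \<eta> (f y u) - \<eta> y \<ge> V y0 \<and> \<psi> (f y u) - \<psi> y \<ge> 0"
      using opt unfolding dual_optimal_def dstar_eq by (rule conjunct2[OF conjunct2])
    obtain p0 where p0: "p0 \<in> G" and pmin: "\<forall>p\<in>G. g p0 \<le> g p"
      using continuous_attains_inf[OF G_compact G_ne gc] by blast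
    have feas: "dual_feasible U f k Y y0 (g p0 + \<psi> y0) \<psi> \<eta>"
      unfolding dual_feasible_def
    proof (intro conjI pc ec ballI)
      fix p assume pG: "p \<in> G"
      obtain y v where p: "p = (y,v)" by (cases p)
      have "g p0 \<le> g (y,v)" using pmin pG p by simp
      moreover have "\<psi> (f y v) - \<psi> y \<ge> 0" using H pG p by auto
      ultimately show "case p of (y, u) \<Rightarrow> 0 \<le> k y u + \<psi> y0 - \<psi> y + \<eta> (f y u) - \<eta> y - (g p0 + \<psi> y0) \<and> 0 \<le> \<psi> (f y u) - \<psi> y"
        using p by (simp add: g_def)
    qed
    have le1: "g p0 + \<psi> y0 \<le> V y0" by (rule weak_duality[OF feas])
    obtain y1 v1 where p01: "p0 = (y1,v1)" by (cases p0)
    have "V y0 \<le> g p0 + \<psi> y0" using H p0 p01 by (auto simp: g_def)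
    then have eq: "g p0 = V y0 - \<psi> y0" using le1 by simp
    have mono: "\<forall>(y,u)\<in>G. \<psi> (f y u) - \<psi> y \<ge> 0" using H by auto
    have "min_on_eq G g (V y0 - \<psi> y0)"
      unfolding min_on_eq_def using p0 eq pmin by auto
    then show "(\<forall>(y,u)\<in>G. \<psi> (f y u) - \<psi> y \<ge> 0) \<and> min_on_eq G g (V y0 - \<psi> y0)" using mono by blast
  next
    assume R: "(\<forall>(y,u)\<in>G. \<psi> (f y u) - \<psi> y \<ge> 0) \<and> min_on_eq G g (V y0 - \<psi> y0)"
    then have low: "\<forall>p\<in>G. V y0 - \<psi> y0 \<le> g p" unfolding min_on_eq_def by blast
    show "dual_optimal U f k Y y0 \<psi> \<eta>"
      unfolding dual_optimal_def dstar_eq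
    proof (intro conjI pc ec ballI)
      fix p assume pG: "p \<in> G"
      obtain y v where p: "p = (y,v)" by (cases p)
      have "V y0 - \<psi> y0 \<le> g (y,v)" using low pG p by simp
      moreover have "\<psi> (f y v) - \<psi> y \<ge> 0" using R pG p by auto
      ultimately show "case p of (y, u) \<Rightarrow> V y0 \<le> k y u + \<psi> y0 - \<psi> y + \<eta> (f y u) - \<eta> y \<and> 0 \<le> \<psi> (f y u) - \<psi> y"
        using p by (simp add: g_def)
    qed
  qed
next
  fix \<eta> :: "'a \<Rightarrow> real"
  assume A: "continuous_on Y \<eta> \<and> min_on_eq G (\<lambda>(y,u). k y u - V y + \<eta> (f y u) - \<eta> y) 0"
  then have low: "\<forall>p\<in>G. 0 \<le> (\<lambda>(y,u). k y u - V y + \<eta> (f y u) - \<eta> y) p" unfolding min_on_eq_def by blast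
  show "dual_optimal U f k Y y0 V \<eta>"
    unfolding dual_optimal_def dstar_eq
  proof (intro conjI V_cont ballI)
    show "continuous_on Y \<eta>" using A by blast
    fix p assume pG: "p \<in> G"
    obtain y v where p: "p = (y,v)" by (cases p)
    have "0 \<le> k y v - V y + \<eta> (f y v) - \<eta> y" using low pG p by auto
    moreover have "V y \<le> V (f y v)" using V_mono pG p by simp
    ultimately show "case p of (y, u) \<Rightarrow> V y0 \<le> k y u + V y0 - V y + \<eta> (f y u) - \<eta> y \<and> 0 \<le> V (f y u) - V y"
      using p by simp
  qed
qed

end

theorem proposition4p4:
  fixes Y :: "(real ^ 'm) set" and U0 :: "'u::metric_space set"
    and U :: "real ^ 'm \<Rightarrow> 'u set"
    and f :: "real ^ 'm \<Rightarrow> 'u \<Rightarrow> real ^ 'm" and k :: "real ^ 'm \<Rightarrow> 'u \<Rightarrow> real"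
    and V :: "real ^ 'm \<Rightarrow> real" and y0 :: "real ^ 'm"
  assumes Y_ne: "Y \<noteq> {}" and Y_cpt: "compact Y"
    and U0_cpt: "compact U0"
    and U_sub: "\<forall>y\<in>Y. U y \<subseteq> U0"
    and U_cpt: "\<forall>y\<in>Y. compact (U y)"
    and U_usc: "usc_on Y U"
    and f_cont: "continuous_on (UNIV \<times> U0) (\<lambda>(y,u). f y u)"
    and k_cont: "continuous_on (UNIV \<times> U0) (\<lambda>(y,u). k y u)"
    and A_ne: "\<forall>y\<in>Y. Aset U f Y y \<noteq> {}"
    and V_lim: "\<forall>y\<in>Y. (\<lambda>T. VT U f k Y T y) \<longlonglongrightarrow> V y"
    and V_cont: "continuous_on Y V"
    and y0: "y0 \<in> Y"
  shows
    "(\<forall>\<psi> \<eta>. continuous_on Y \<psi> \<and> continuous_on Y \<eta> \<longrightarrow>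
        (dual_optimal U f k Y y0 \<psi> \<eta> \<longleftrightarrow>
           (\<forall>(y,u)\<in>Gset U f Y. \<psi> (f y u) - \<psi> y \<ge> 0) \<and>
           min_on_eq (Gset U f Y) (\<lambda>(y,u). k y u - \<psi> y + \<eta> (f y u) - \<eta> y) (V y0 - \<psi> y0)))
     \<and>
     (\<forall>\<eta>. continuous_on Y \<eta> \<and>
          min_on_eq (Gset U f Y) (\<lambda>(y,u). k y u - V y + \<eta> (f y u) - \<eta> y) 0
          \<longrightarrow> dual_optimal U f k Y y0 V \<eta>)"
proof -
  interpret osys Y U0 U f k V y0
    by (unfold_locales) (rule Y_ne Y_cpt U0_cpt U_sub U_cpt U_usc f_cont k_cont A_ne V_lim V_cont y0)+
  show ?thesis by (rule main)
qed

end
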